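(* Let $d\ge2$ and let $G$ be a closed convex germ with $\overline{\mathrm{conv}}(\Delta_{\rm e}\cup B_{\rm i})\subseteq G$. If $G$ is not a qplex, then there are uncountably many distinct qplexes containing $G$.
   Context: Fix an integer $d\ge 2$. $\langle\cdot,\cdot\rangle$ is the standard inner product on $\mathbb{R}^{d^2}$, $\|\cdot\|$ the Euclidean norm. $\Delta=\{p\in\mathbb{R}^{d^2}: p(i)\ge0,\ \sum_ip(i)=1\}$; $H=\{u\in\mathbb{R}^{d^2}:\sum_i u(i)=1\}$; $c=(1/d^2,\dots,1/d^2)$. $\overline{\mathrm{conv}}(X)$ denotes the closed convex hull. For $A\subseteq H$ the polar is $A^*=\{u\in H:\langle u,v\rangle\ge\frac{1}{d(d+1)}\ \forall v\in A\}$. Out-ball: $B_{\rm o}=\{u\in H:\|u-c\|\le r_{\rm o}\}$, $r_{\rm o}^2=\frac{d-1}{d^2(d+1)}$. In-ball: $B_{\rm i}=\{u\in H:\|u-c\|\le r_{\rm i}\}$, $r_{\rm i}^2=\frac{1}{d^2(d^2-1)}$. Basis distributions: $e_k(i)=\frac{1}{d+1}(\delta_{ki}+\frac1d)$; basis simplex $\Delta_{\rm e}=\mathrm{conv}\{e_1,\dots,e_{d^2}\}$. A subset $A\subseteq\Delta$ is a germ if $\frac{1}{d(d+1)}\le\langle p,s\rangle\le\frac{2}{d(d+1)}$ for all $p,s\in A$. A qplex is a set $Q\subseteq\Delta\cap B_{\rm o}$ with $Q^*=Q$. *)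

theory Defs
  imports "HOL-Analysis.Analysis"
begin

text \<open>Points of R^(d^2) are vectors real^'n with CARD('n) = d^2 (assumed in the theorem).
  The parameter d :: nat is passed explicitly.\<close>

definition prob_simplex :: "(real^'n::finite) set" where
  "prob_simplex = {p. (\<forall>i. 0 \<le> p $ i) \<and> (\<Sum>i\<in>UNIV. p $ i) = 1}"

definition hyp :: "(real^'n::finite) set" where
  "hyp = {u. (\<Sum>i\<in>UNIV. u $ i) = 1}"

definition centre :: "nat \<Rightarrow> real^'n::finite" where
  "centre d = (\<chi> i. 1 / (real d)^2)"

definition polar :: "nat \<Rightarrow> (real^'n::finite) set \<Rightarrow> (real^'n) set" where
  "polar d A = {u \<in> hyp. \<forall>v\<in>A. 1 / (real d * (real d + 1)) \<le> inner u v}"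

definition out_ball :: "nat \<Rightarrow> (real^'n::finite) set" where
  "out_ball d = {u \<in> hyp. norm (u - centre d) \<le> sqrt ((real d - 1) / ((real d)^2 * (real d + 1)))}"

definition in_ball :: "nat \<Rightarrow> (real^'n::finite) set" where
  "in_ball d = {u \<in> hyp. norm (u - centre d) \<le> sqrt (1 / ((real d)^2 * ((real d)^2 - 1)))}"

definition basis_dist :: "nat \<Rightarrow> 'n::finite \<Rightarrow> real^'n" where
  "basis_dist d k = (\<chi> i. (1 / (real d + 1)) * ((if k = i then 1 else 0) + 1 / real d))"

definition basis_simplex :: "nat \<Rightarrow> (real^'n::finite) set" where
  "basis_simplex d = convex hull (range (basis_dist d))"

definition closed_conv :: "(real^'n::finite) set \<Rightarrow> (real^'n) set" where
  "closed_conv X = closure (convex hull X)"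

definition germ :: "nat \<Rightarrow> (real^'n::finite) set \<Rightarrow> bool" where
  "germ d A \<longleftrightarrow> A \<subseteq> prob_simplex \<and>
     (\<forall>p\<in>A. \<forall>s\<in>A. 1 / (real d * (real d + 1)) \<le> inner p s
                    \<and> inner p s \<le> 2 / (real d * (real d + 1)))"

definition qplex :: "nat \<Rightarrow> (real^'n::finite) set \<Rightarrow> bool" where
  "qplex d Q \<longleftrightarrow> Q \<subseteq> prob_simplex \<inter> out_ball d \<and> polar d Q = Q"

end

theory Submission
  imports Defs
begin

lemma E1: "(r::real) \<ge> 2 \<Longrightarrow> 2 / (r * (r + 1)) - 1 / r^2 = (r - 1) / (r^2 * (r + 1))"
proof -
  assume "r \<ge> 2"
  then have p: "r \<noteq> 0" "r + 1 \<noteq> 0" by auto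
  show ?thesis
    apply (rule eq_divide_imp) using p apply simp
    using p by (simp add: divide_simps power2_eq_square)
qed
lemma E2: "(r::real) \<ge> 2 \<Longrightarrow> 1 / r^2 - 1 / (r * (r + 1)) = 1 / (r^2 * (r + 1))"
proof -
  assume "r \<ge> 2"
  then have p: "r \<noteq> 0" "r + 1 \<noteq> 0" by auto
  show ?thesis
    apply (rule eq_divide_imp) using p apply simp
    using p by (simp add: divide_simps power2_eq_square)
qed
lemma E3: "(r::real) \<ge> 2 \<Longrightarrow> (1 / (r^2 * (r + 1)))^2 / (1 / (r^2 * (r^2 - 1))) = (r - 1) / (r^2 * (r + 1))"
proof -
  assume "r \<ge> 2"
  then have p: "r \<noteq> 0" "r + 1 \<noteq> 0" "r - 1 \<noteq> 0" "r*r - 1 \<noteq> 0" by (auto simp: algebra_simps) (smt (verit) mult_le_cancel_left1)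
  show ?thesis
    apply (rule eq_divide_imp) using p apply simp
    using p by (simp add: divide_simps power2_eq_square) (simp add: algebra_simps)
qed
lemma E4: "(r::real) \<ge> 2 \<Longrightarrow> 1 / r^2 + (r - 1) / (r^2 * (r + 1)) = 2 / (r * (r + 1))"
  using E1 by force
lemma E5: "(r::real) \<ge> 2 \<Longrightarrow> 1 / (r * (r + 1)) \<le> 1 / r^2"
  by (intro divide_left_mono) (auto simp: power2_eq_square)

lemma sum_centre:
  assumes "CARD('n) = d^2" "d \<ge> 1"
  shows "(\<Sum>i\<in>UNIV. (centre d :: real^'n::finite) $ i) = 1"
  using assms by (simp add: centre_def)

lemma centre_hyp:
  assumes "CARD('n) = d^2" "d \<ge> 1"
  shows "(centre d :: real^'n::finite) \<in> hyp"
  using sum_centre[OF assms] by (simp add: hyp_def)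

lemma inner_centre:
  shows "inner (centre d) (x::real^'n::finite) = (\<Sum>i\<in>UNIV. x $ i) / (real d)^2"
  unfolding centre_def inner_vec_def by (simp add: sum_divide_distrib)

lemma inner_centre_hyp:
  assumes "x \<in> hyp"
  shows "inner (centre d) (x::real^'n::finite) = 1 / (real d)^2"
    "inner x (centre d) = 1 / (real d)^2"
  using assms inner_centre[of d x] by (auto simp: hyp_def inner_commute)

lemma sum_diff_hyp:
  assumes "u \<in> hyp" "p \<in> hyp"
  shows "(\<Sum>i\<in>UNIV. (u - p :: real^'n::finite) $ i) = 0"
  using assms by (simp add: hyp_def sum_subtractf)

lemma inner_hyp:
  assumes "CARD('n) = d^2" "d \<ge> 1" "u \<in> hyp" "p \<in> hyp"
  shows "inner u (p::real^'n::finite) = 1 / (real d)^2 + inner (u - centre d) (p - centre d)"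
proof -
  have c: "centre d \<in> (hyp :: (real^'n) set)" using centre_hyp[OF assms(1,2)] .
  show ?thesis
    using inner_centre_hyp[OF assms(3), of d] inner_centre_hyp[OF assms(4), of d]
      inner_centre_hyp[OF c, of d]
    by (simp add: inner_diff_left inner_diff_right)
qed

lemma self_lower:
  assumes "CARD('n) = d^2" "d \<ge> 2" "u \<in> hyp"
  shows "1 / (real d * (real d + 1)) \<le> inner u (u::real^'n::finite)"
proof -
  have "inner u u = 1 / (real d)^2 + inner (u - centre d) (u - centre d)"
    using inner_hyp[OF assms(1) _ assms(3) assms(3)] assms(2) by simp
  moreover have "0 \<le> inner (u - centre d) (u - centre d)" by simp
  moreover have "1 / (real d * (real d + 1)) \<le> 1 / (real d)^2"
    using assms(2) by (intro divide_left_mono) (auto simp: power2_eq_square)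
  ultimately show ?thesis by linarith
qed

lemma hyp_out_ball:
  assumes "CARD('n) = d^2" "d \<ge> 2" "u \<in> hyp"
    and "inner u u \<le> 2 / (real d * (real d + 1))"
  shows "(u::real^'n::finite) \<in> out_ball d"
proof -
  have "inner u u = 1 / (real d)^2 + (norm (u - centre d))^2"
    using inner_hyp[OF assms(1) _ assms(3) assms(3)] assms(2) by (simp add: power2_norm_eq_inner)
  hence "(norm (u - centre d))^2 \<le> 2 / (real d * (real d + 1)) - 1 / (real d)^2"
    using assms(4) by linarith
  also have "\<dots> = (real d - 1) / ((real d)^2 * (real d + 1))"
    using E1[of "real d"] assms(2) by simp
  finally show ?thesis using assms(3) unfolding out_ball_def
    by (auto intro: real_le_rsqrt)
qed

lemma basis_inner:
  assumes "u \<in> hyp" "d \<ge> 1"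
  shows "inner u (basis_dist d k) = ((u::real^'n::finite) $ k + 1 / real d) / (real d + 1)"
proof -
  have "inner u (basis_dist d k) = (\<Sum>i\<in>UNIV. (1 / (real d + 1)) * (if i = k then u $ i else 0) + (1 / (real d + 1) / real d) * u $ i)"
    unfolding basis_dist_def inner_vec_def
    by (rule sum.cong) (auto simp: algebra_simps)
  also have "\<dots> = (1 / (real d + 1)) * u $ k + (1 / (real d + 1) / real d) * (\<Sum>i\<in>UNIV. u $ i)"
    by (simp add: sum.distrib sum_distrib_left[symmetric] if_distrib[of "\<lambda>x. x / _"] sum_divide_distrib cong: if_cong)
  also have "\<dots> = (1 / (real d + 1)) * u $ k + (1 / (real d + 1) / real d)"
    using assms(1) by (simp add: hyp_def)
  also have "\<dots> = (u $ k + 1 / real d) / (real d + 1)"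
    by (simp add: add_divide_distrib)
  finally show ?thesis .
qed

lemma basis_nonneg:
  assumes "u \<in> hyp" "d \<ge> 1" "1 / (real d * (real d + 1)) \<le> inner u (basis_dist d k)"
  shows "0 \<le> (u::real^'n::finite) $ k"
proof -
  have h: "1 / (real d * (real d + 1)) \<le> (u $ k + 1 / real d) / (real d + 1)"
    using assms basis_inner by metis
  have r: "real d > 0" using assms(2) by auto
  have "(u $ k + 1 / real d) / (real d + 1) = (u $ k) / (real d + 1) + 1 / (real d * (real d + 1))"
    by (simp add: add_divide_distrib)
  with h have "0 \<le> (u $ k) / (real d + 1)" by linarith
  thus ?thesis using r by (simp add: zero_le_divide_iff)
qed


lemma polar_norm:
  fixes u :: "real^'n::finite"
  assumes "CARD('n) = d^2" "d \<ge> 2" "in_ball d \<subseteq> G" "u \<in> polar d G"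
  shows "(norm (u - centre d))^2 \<le> (real d - 1) / ((real d)^2 * (real d + 1))"
proof -
  define c where "c = (centre d :: real^'n)"
  define x where "x = u - c"
  define ri where "ri = sqrt (1 / ((real d)^2 * ((real d)^2 - 1)))"
  have d2: "real d \<ge> 2" using assms(2) by simp
  have uh: "u \<in> hyp" using assms(4) by (simp add: polar_def)
  have ch: "c \<in> hyp" using centre_hyp[OF assms(1)] assms(2) c_def by simp
  have "(real d)^2 \<ge> 2^2" using d2 by (intro power_mono) auto
  hence dpos: "(real d)^2 * ((real d)^2 - 1) > 0" using d2 by simp
  have ri_pos: "ri > 0" using dpos by (simp add: ri_def)
  have ri2: "ri^2 = 1 / ((real d)^2 * ((real d)^2 - 1))"
    using dpos by (simp add: ri_def)
  have R0: "0 \<le> (real d - 1) / ((real d)^2 * (real d + 1))" using d2 by simp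
  show ?thesis
  proof (cases "x = 0")
    case True thus ?thesis using R0 by (simp add: x_def c_def)
  next
    case False
    define p where "p = c - (ri / norm x) *\<^sub>R x"
    have sx: "(\<Sum>i\<in>UNIV. x $ i) = 0" using sum_diff_hyp[OF uh ch] x_def by simp
    have ph: "p \<in> hyp" using ch sx unfolding p_def hyp_def
      by (simp add: sum_subtractf sum_distrib_left[symmetric] sum_divide_distrib[symmetric])
    have pn: "norm (p - c) = ri" using False ri_pos by (simp add: p_def)
    have "p \<in> in_ball d" using ph pn unfolding in_ball_def ri_def c_def by simp
    hence "p \<in> G" using assms(3) by blast
    hence ge: "1 / (real d * (real d + 1)) \<le> inner u p" using assms(4) by (simp add: polar_def)
    have "inner u p = 1/(real d)^2 + inner x (p - c)"
      using inner_hyp[OF assms(1) _ uh ph] assms(2) by (simp add: x_def c_def)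
    moreover have "inner x (p - c) = - ri * norm x"
      using False by (simp add: p_def dot_square_norm power2_eq_square)
    ultimately have "ri * norm x \<le> 1/(real d)^2 - 1/(real d * (real d + 1))" using ge by linarith
    also have "\<dots> = 1/((real d)^2 * (real d + 1))" using E2 d2 by simp
    finally have h: "ri * norm x \<le> 1/((real d)^2 * (real d + 1))" .
    have "(ri * norm x)^2 \<le> (1/((real d)^2 * (real d + 1)))^2"
      using h ri_pos by (intro power_mono) auto
    hence "ri^2 * (norm x)^2 \<le> (1/((real d)^2 * (real d + 1)))^2" by (simp add: power_mult_distrib)
    hence "(norm x)^2 \<le> (1/((real d)^2 * (real d + 1)))^2 / ri^2"
      using ri_pos by (simp add: le_divide_eq mult.commute)
    also have "\<dots> = (real d - 1) / ((real d)^2 * (real d + 1))" using E3 d2 ri2 by simp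
    finally show ?thesis by (simp add: x_def c_def)
  qed
qed

lemma polar_upper:
  assumes "CARD('n) = d^2" "d \<ge> 2" "in_ball d \<subseteq> G" "u \<in> polar d G" "p \<in> polar d G"
  shows "inner u (p::real^'n::finite) \<le> 2 / (real d * (real d + 1))"
proof -
  define R where "R = (real d - 1) / ((real d)^2 * (real d + 1))"
  define a where "a = norm (u - centre d)"
  define b where "b = norm (p - centre d)"
  have ab: "a^2 \<le> R" "b^2 \<le> R" using polar_norm assms unfolding a_def b_def R_def by blast+
  have cs: "inner (u - centre d) (p - centre d) \<le> a * b" unfolding a_def b_def by (rule norm_cauchy_schwarz)
  have "0 \<le> (a - b)^2" by simp
  hence "2 * a * b \<le> a^2 + b^2" by (simp add: power2_diff)
  hence ab2: "a * b \<le> R" using ab by linarith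
  have "inner u p = 1 / (real d)^2 + inner (u - centre d) (p - centre d)"
    using inner_hyp[OF assms(1) _ , of u p] assms by (simp add: polar_def)
  also have "\<dots> \<le> 1 / (real d)^2 + R" using cs ab2 by linarith
  also have "\<dots> = 2 / (real d * (real d + 1))" using E4[of "real d"] assms(2) by (simp add: R_def)
  finally show ?thesis .
qed

lemma polar_mono: "A \<subseteq> B \<Longrightarrow> polar d B \<subseteq> polar d A"
  unfolding polar_def by auto

lemma germ_sub_polar: "germ d A \<Longrightarrow> A \<subseteq> polar d A"
  unfolding germ_def polar_def prob_simplex_def hyp_def by auto

lemma germ_out:
  assumes "CARD('n) = d^2" "d \<ge> 2" "germ d (A::(real^'n::finite) set)"
  shows "A \<subseteq> prob_simplex \<inter> out_ball d"
proof
  fix p assume p: "p \<in> A"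
  have "p \<in> prob_simplex" using assms(3) p by (auto simp: germ_def)
  hence "p \<in> hyp" by (simp add: prob_simplex_def hyp_def)
  moreover have "inner p p \<le> 2 / (real d * (real d + 1))" using assms(3) p by (auto simp: germ_def)
  ultimately have "p \<in> out_ball d" using hyp_out_ball assms by blast
  thus "p \<in> prob_simplex \<inter> out_ball d" using \<open>p \<in> prob_simplex\<close> by blast
qed

lemma germI:
  assumes "CARD('n) = d^2" "d \<ge> 2" "in_ball d \<subseteq> G" "\<And>k. basis_dist d k \<in> G"
    "A \<subseteq> polar d G" "\<forall>p\<in>A. \<forall>q\<in>A. 1 / (real d * (real d + 1)) \<le> inner p q"
  shows "germ d (A::(real^'n::finite) set)"
  unfolding germ_def
proof (intro conjI ballI)
  show "A \<subseteq> prob_simplex"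
  proof
    fix u assume u: "u \<in> A"
    hence up: "u \<in> polar d G" using assms(5) by blast
    hence uh: "u \<in> hyp" by (simp add: polar_def)
    have "\<forall>k. 0 \<le> u $ k"
    proof
      fix k
      have "1 / (real d * (real d + 1)) \<le> inner u (basis_dist d k)"
        using up assms(4)[of k] by (simp add: polar_def)
      thus "0 \<le> u $ k" using basis_nonneg[OF uh, of d k] assms(2) by simp
    qed
    thus "u \<in> prob_simplex" using uh by (simp add: prob_simplex_def hyp_def)
  qed
  fix p q assume "p \<in> A" "q \<in> A"
  thus "1 / (real d * (real d + 1)) \<le> inner p q" using assms(6) by blast
  show "inner p q \<le> 2 / (real d * (real d + 1))"
    using polar_upper[OF assms(1-3)] assms(5) \<open>p \<in> A\<close> \<open>q \<in> A\<close> by blast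
qed

lemma exists_qplex:
  assumes "CARD('n) = d^2" "d \<ge> 2" "in_ball d \<subseteq> G" "\<And>k. basis_dist d k \<in> G"
    "G \<subseteq> A" "germ d (A::(real^'n::finite) set)"
  shows "\<exists>M. qplex d M \<and> A \<subseteq> M"
proof -
  let ?S = "{B. germ d B \<and> A \<subseteq> B}"
  have "\<exists>M\<in>?S. \<forall>X\<in>?S. M \<subseteq> X \<longrightarrow> X = M"
  proof (rule subset_Zorn_nonempty)
    show "?S \<noteq> {}" using assms(6) by blast
  next
    fix C assume C: "C \<noteq> {}" "subset.chain ?S C"
    have sub: "C \<subseteq> ?S" and ch: "\<forall>X\<in>C. \<forall>Y\<in>C. X \<subseteq> Y \<or> Y \<subseteq> X"
      using C(2) unfolding subset_chain_def by auto
    have "germ d (\<Union>C)"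
      unfolding germ_def
    proof (intro conjI ballI)
      show "\<Union>C \<subseteq> prob_simplex" using sub by (auto simp: germ_def)
      fix p q assume "p \<in> \<Union>C" "q \<in> \<Union>C"
      then obtain X Y where XY: "X \<in> C" "Y \<in> C" "p \<in> X" "q \<in> Y" by blast
      then obtain Z where Z: "Z \<in> C" "p \<in> Z" "q \<in> Z" using ch by blast
      hence "germ d Z" using sub by blast
      thus "1 / (real d * (real d + 1)) \<le> inner p q" "inner p q \<le> 2 / (real d * (real d + 1))"
        using Z unfolding germ_def by auto
    qed
    moreover have "A \<subseteq> \<Union>C" using C(1) sub by blast
    ultimately show "\<Union>C \<in> ?S" by blast
  qed
  then obtain M where M0: "M \<in> ?S" and max0: "\<forall>X\<in>?S. M \<subseteq> X \<longrightarrow> X = M"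
    by (rule bexE)
  have M: "germ d M" "A \<subseteq> M" using M0 by auto
  have max: "\<And>X. germ d X \<Longrightarrow> A \<subseteq> X \<Longrightarrow> M \<subseteq> X \<Longrightarrow> X = M" using max0 by blast
  have GM: "G \<subseteq> M" using assms(5) M(2) by blast
  have MM: "M \<subseteq> polar d M" using germ_sub_polar[OF M(1)] .
  have "polar d M \<subseteq> M"
  proof
    fix u assume u: "u \<in> polar d M"
    have uG: "polar d M \<subseteq> polar d G" using polar_mono[OF GM] .
    have "germ d (insert u M)"
    proof (rule germI[OF assms(1-4)])
      show "insert u M \<subseteq> polar d G" using u uG MM by blast
      have uh: "u \<in> hyp" using u by (simp add: polar_def)
      have uM: "\<forall>q\<in>M. 1 / (real d * (real d + 1)) \<le> inner u q" using u by (simp add: polar_def)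
      have MM': "\<forall>p\<in>M. \<forall>q\<in>M. 1 / (real d * (real d + 1)) \<le> inner p q" using M(1) by (simp add: germ_def)
      show "\<forall>p\<in>insert u M. \<forall>q\<in>insert u M. 1 / (real d * (real d + 1)) \<le> inner p q"
        using uM MM' self_lower[OF assms(1,2) uh] by (metis inner_commute insert_iff)
    qed
    hence "insert u M = M" using max M(2) by blast
    thus "u \<in> M" by blast
  qed
  hence "qplex d M" using MM germ_out[OF assms(1,2) M(1)] unfolding qplex_def by blast
  thus ?thesis using M(2) by blast
qed



theorem mainTheorem5:
  fixes d :: nat and G :: "(real^'n::finite) set"
  assumes "d \<ge> 2"
    and "CARD('n) = d^2"
    and "closed G" and "convex G" and "germ d G"
    and "closed_conv (basis_simplex d \<union> in_ball d) \<subseteq> G"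
    and "\<not> qplex d G"
  shows "uncountable {Q :: (real^'n) set. qplex d Q \<and> G \<subseteq> Q}"
proof -
  have d1: "d \<ge> 1" using assms(1) by simp
  have d2: "real d \<ge> 2" using assms(1) by simp
  have "basis_simplex d \<union> in_ball d \<subseteq> closed_conv (basis_simplex d \<union> in_ball d)"
    unfolding closed_conv_def by (rule order_trans[OF hull_subset closure_subset])
  hence sub: "basis_simplex d \<union> in_ball d \<subseteq> G" using assms(6) by blast
  have inG: "in_ball d \<subseteq> G" using sub by blast
  have bG: "\<And>k. basis_dist d k \<in> G" using sub unfolding basis_simplex_def
  proof -
    fix k :: 'n
    have "basis_dist d k \<in> convex hull (range (basis_dist d))" by (rule hull_inc) simp
    thus "basis_dist d k \<in> G" using sub unfolding basis_simplex_def by blast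
  qed
  define c where "c = (centre d :: real^'n)"
  have ch: "c \<in> hyp" using centre_hyp[OF assms(2) d1] by (simp add: c_def)
  have "1 \<le> (real d)^2" using d2 by (simp add: one_le_power)
  hence "c \<in> in_ball d" using ch by (simp add: in_ball_def c_def)
  hence cG: "c \<in> G" using inG by blast
  have Ghyp: "G \<subseteq> hyp" using assms(5) by (auto simp: germ_def prob_simplex_def hyp_def)
  have GP: "G \<subseteq> polar d G" using germ_sub_polar[OF assms(5)] .
  have "polar d G \<noteq> G" using assms(7) germ_out[OF assms(2,1,5)] unfolding qplex_def by blast
  then obtain u where u: "u \<in> polar d G" "u \<notin> G" using GP by blast
  have uh: "u \<in> hyp" using u(1) by (simp add: polar_def)
  define v where "v = u - c"
  define us where "us t = c + t *\<^sub>R v" for t :: real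
  have sv: "(\<Sum>i\<in>UNIV. v $ i) = 0" using sum_diff_hyp[OF uh ch] by (simp add: v_def)
  have us_hyp: "us t \<in> hyp" for t
    using ch sv unfolding us_def hyp_def by (simp add: sum.distrib sum_distrib_left[symmetric])
  define \<alpha> where "\<alpha> = 1 / (real d * (real d + 1))"
  define \<gamma> where "\<gamma> = 1 / ((real d)^2 * (real d + 1))"
  have ag: "1 / (real d)^2 - \<gamma> = \<alpha>" using E2[OF d2] by (simp add: \<alpha>_def \<gamma>_def)
  have gpos: "\<gamma> > 0" using d2 by (simp add: \<gamma>_def)
  have a_le: "\<alpha> \<le> 1 / (real d)^2" using E5[OF d2] by (simp add: \<alpha>_def)
  have cx: "inner c x = 1 / (real d)^2" "inner x c = 1 / (real d)^2" if "x \<in> hyp" for x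
    using inner_centre_hyp[OF that, of d] by (simp_all add: c_def)
  have us_polar: "us t \<in> polar d G" if t: "0 \<le> t" "t \<le> 1" for t
  proof -
    have "\<alpha> \<le> inner (us t) x" if x: "x \<in> G" for x
    proof -
      have xh: "x \<in> hyp" using x Ghyp by blast
      have "inner (us t) x = (1 - t) * inner c x + t * inner u x"
        by (simp add: us_def v_def inner_add_left inner_diff_left algebra_simps)
      also have "\<dots> = (1 - t) * (1 / (real d)^2) + t * inner u x" using cx[OF xh] by simp
      finally have eq: "inner (us t) x = (1 - t) * (1 / (real d)^2) + t * inner u x" .
      have "\<alpha> \<le> inner u x" using u(1) x by (simp add: polar_def \<alpha>_def)
      hence "t * \<alpha> \<le> t * inner u x" using t by (simp add: mult_left_mono)
      moreover have "(1 - t) * \<alpha> \<le> (1 - t) * (1 / (real d)^2)" using t a_le by (intro mult_left_mono) auto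
      ultimately show ?thesis using eq by (simp add: algebra_simps)
    qed
    thus ?thesis using us_hyp by (simp add: polar_def \<alpha>_def)
  qed
  have "open (- G)" using assms(3) by (simp add: open_Compl)
  hence "\<exists>e>0. \<forall>y. dist y u < e \<longrightarrow> y \<in> - G" using u(2) unfolding open_dist by simp
  then obtain e where e: "e > 0" "\<And>y. dist y u < e \<Longrightarrow> y \<in> - G" by blast
  define s0 where "s0 = max 0 (1 - e / (norm v + 1))"
  have nv: "norm v + 1 > 0" using norm_ge_zero[of v] by linarith
  hence "e / (norm v + 1) > 0" using e(1) by simp
  hence s0: "0 \<le> s0" "s0 < 1" by (auto simp: s0_def)
  have key: "\<exists>M. qplex d M \<and> G \<subseteq> M \<and> us s \<in> M \<and> (\<forall>t. s < t \<longrightarrow> us t \<notin> M)"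
    if s: "s \<in> {s0<..1}" for s
  proof -
    have sp: "0 < s" "s \<le> 1" using s s0 by auto
    have "1 - s < e / (norm v + 1)" using s by (auto simp: s0_def)
    hence "(1 - s) * (norm v + 1) < e" using nv by (simp add: pos_less_divide_eq)
    moreover have "(1 - s) * norm v \<le> (1 - s) * (norm v + 1)" using sp by (simp add: mult_left_mono)
    moreover have "dist (us s) u = (1 - s) * norm v"
    proof -
      have "us s - u = (s - 1) *\<^sub>R v" by (simp add: us_def v_def algebra_simps)
      thus ?thesis using sp by (simp add: dist_norm)
    qed
    ultimately have "us s \<notin> G" using e(2)[of "us s"] by auto
    then obtain a b where ab: "inner a (us s) < b" "\<forall>x\<in>G. inner a x > b"
      using separating_hyperplane_closed_point[OF assms(4) assms(3)] by blast
    define \<delta> where "\<delta> = inner a c"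
    define L where "L = inner a v"
    have aus: "inner a (us t) = \<delta> + t * L" for t
      by (simp add: us_def \<delta>_def L_def inner_add_right)
    have "\<delta> > b" using ab(2) cG by (simp add: \<delta>_def)
    hence sL: "s * L < b - \<delta>" using ab(1) aus[of s] by simp
    hence sLn: "s * L < 0" using \<open>\<delta> > b\<close> by linarith
    hence Ln: "L < 0" using sp by (simp add: mult_less_0_iff)
    define \<rho> where "\<rho> = \<gamma> / (- (s * L))"
    have rpos: "\<rho> > 0" using gpos sLn by (simp add: \<rho>_def divide_pos_neg)
    have rsL: "\<rho> * (s * L) = - \<gamma>" using sLn by (auto simp: \<rho>_def)
    define a0 where "a0 = a - (\<chi> i. \<delta>)"
    have ione: "inner (\<chi> i. \<delta>) x = \<delta> * (\<Sum>i\<in>UNIV. x $ i)" for x :: "real^'n"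
      by (simp add: inner_vec_def sum_distrib_left)
    have a0x: "inner a0 x = inner a x - \<delta>" if "x \<in> hyp" for x
      using that by (simp add: a0_def inner_diff_left ione hyp_def)
    have "\<delta> = (\<Sum>i\<in>UNIV. a $ i) / (real d)^2"
      using inner_centre[of d a] by (simp add: \<delta>_def c_def inner_commute)
    hence sa0: "(\<Sum>i\<in>UNIV. a0 $ i) = 0" using d1 assms(2)
      by (simp add: a0_def sum_subtractf)
    define w where "w = c + \<rho> *\<^sub>R a0"
    have wh: "w \<in> hyp" using ch sa0 unfolding w_def hyp_def
      by (simp add: sum.distrib sum_distrib_left[symmetric])
    have wx: "inner w x = 1 / (real d)^2 + \<rho> * (inner a x - \<delta>)" if "x \<in> hyp" for x
      using that cx[OF that] a0x[OF that] by (simp add: w_def inner_add_left)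
    have wG: "w \<in> polar d G"
    proof -
      have "\<alpha> < inner w x" if x: "x \<in> G" for x
      proof -
        have "inner a x - \<delta> > s * L" using ab(2) x sL by force
        hence "\<rho> * (inner a x - \<delta>) > \<rho> * (s * L)" using rpos by simp
        thus ?thesis using wx[of x] x Ghyp rsL ag by auto
      qed
      thus ?thesis using wh by (auto simp: polar_def \<alpha>_def less_imp_le)
    qed
    have wus: "inner w (us t) = 1 / (real d)^2 + \<rho> * t * L" for t
      using wx[OF us_hyp[of t]] aus[of t] by simp
    have wus_s: "inner w (us s) = \<alpha>" using wus[of s] rsL ag by (simp add: mult.assoc)
    have wus_t: "inner w (us t) < \<alpha>" if "s < t" for t
    proof -
      have "\<rho> * t * L < \<rho> * s * L" using that rpos Ln by (simp add: mult.assoc)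
      thus ?thesis using wus[of t] wus[of s] wus_s by linarith
    qed
    define A where "A = insert (us s) (insert w G)"
    have usG: "us s \<in> polar d G" using us_polar sp by simp
    have AP: "A \<subseteq> polar d G" using usG wG GP by (auto simp: A_def)
    have pair: "\<forall>p\<in>A. \<forall>q\<in>A. \<alpha> \<le> inner p q"
    proof (intro ballI)
      fix p q assume pq: "p \<in> A" "q \<in> A"
      have G2: "\<forall>p\<in>G. \<forall>q\<in>G. \<alpha> \<le> inner p q" using assms(5) by (simp add: germ_def \<alpha>_def)
      have Pl: "\<alpha> \<le> inner p q" if "p \<in> polar d G" "q \<in> G" for p q :: "real^'n"
        using that by (simp add: polar_def \<alpha>_def)
      have sl: "\<alpha> \<le> inner p p" if "p \<in> hyp" for p :: "real^'n"
        using self_lower[OF assms(2,1) that] by (simp add: \<alpha>_def)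
      have ws: "\<alpha> \<le> inner w (us s)" "\<alpha> \<le> inner (us s) w" using wus_s by (simp_all add: inner_commute)
      show "\<alpha> \<le> inner p q"
        using pq G2 Pl[OF usG] Pl[OF wG] sl[OF wh] sl[OF us_hyp[of s]] ws
        unfolding A_def by (auto simp: inner_commute)
    qed
    have gA: "germ d A" using germI[OF assms(2,1) inG bG AP] pair by (simp add: \<alpha>_def)
    obtain M where M: "qplex d M" "A \<subseteq> M"
      using exists_qplex[OF assms(2,1) inG bG _ gA] by (auto simp: A_def)
    have "us t \<notin> M" if t: "s < t" for t
    proof
      assume "us t \<in> M"
      hence "us t \<in> polar d M" using M(1) by (simp add: qplex_def)
      moreover have "w \<in> M" using M(2) by (simp add: A_def)
      ultimately have "\<alpha> \<le> inner (us t) w" by (simp add: polar_def \<alpha>_def)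
      thus False using wus_t[OF t] by (simp add: inner_commute)
    qed
    thus ?thesis using M by (auto simp: A_def)
  qed
  hence "\<forall>s\<in>{s0<..1}. \<exists>M. qplex d M \<and> G \<subseteq> M \<and> us s \<in> M \<and> (\<forall>t. s < t \<longrightarrow> us t \<notin> M)" by blast
  hence "\<exists>F. \<forall>s\<in>{s0<..1}. qplex d (F s) \<and> G \<subseteq> F s \<and> us s \<in> F s \<and> (\<forall>t. s < t \<longrightarrow> us t \<notin> F s)"
    by (rule bchoice)
  then obtain F where F: "\<forall>s\<in>{s0<..1}. qplex d (F s) \<and> G \<subseteq> F s \<and> us s \<in> F s \<and> (\<forall>t. s < t \<longrightarrow> us t \<notin> F s)"
    by blast
  have inj: "inj_on F {s0<..1}"
  proof (rule inj_onI)
    fix s t assume st: "s \<in> {s0<..1}" "t \<in> {s0<..1}" "F s = F t"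
    show "s = t"
    proof (rule ccontr)
      assume "s \<noteq> t"
      hence "s < t \<or> t < s" by linarith
      thus False
      proof
        assume "s < t"
        hence "us t \<notin> F s" "us t \<in> F t" using F st(1,2) by auto
        thus False using st(3) by simp
      next
        assume "t < s"
        hence "us s \<notin> F t" "us s \<in> F s" using F st(1,2) by auto
        thus False using st(3) by simp
      qed
    qed
  qed
  have img: "F ` {s0<..1} \<subseteq> {Q. qplex d Q \<and> G \<subseteq> Q}" using F by auto
  show ?thesis
  proof
    assume "countable {Q :: (real^'n) set. qplex d Q \<and> G \<subseteq> Q}"
    hence "countable (F ` {s0<..1})" using img countable_subset by blast
    hence "countable {s0<..1}" using inj countable_image_inj_on by blast
    thus False using uncountable_half_open_interval_2 s0(2) by blast
  qed
qed
end
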